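(* Let $C\le\mathbb{F}^n$ be an $\mathbb{F}$-linear $[n,k,d]$-code with ordered basis $B=(a_1,\dots,a_k)$, and let ${\sf Basis}(B)$ and ${\sf Code}(B)$ be as defined in the context. (a) ${\sf Basis}(B)$ is an ordered basis of ${\sf Code}(B)$. Moreover, ${\sf Code}(B)$ is an $\mathbb{F}$-linear $[n',k',d']$-code with $n'=(k+1)n$, $k'=k+1$ and $d'\ge kd$. (b) Suppose that $C$ is $u$-bounded relative to $B$ for some positive integer $u$. Then $d'=(k+1)d$. Furthermore, ${\sf Code}(B)$ is $ku$-bounded relative to ${\sf Basis}(B)$ if and only if $u\ge d(1+2k^{-1})$.
   Context: $\mathbb{F}$ is an arbitrary field and vectors in $\mathbb{F}^n$ are column vectors. The weight $\mathrm{wt}(x)$ of $x\in\mathbb{F}^n$ is its number of nonzero coordinates. An $[n,k,d]$-code is a $k$-dimensional subspace of $\mathbb{F}^n$ whose minimum distance (the minimum weight of a nonzero codeword) is $d$. Boundedness: let $u$ be a positive integer and let $C$ be an $[n,k,d]$-code with ordered basis $B=(a_1,\dots,a_k)$. Then $C$ is $u$-bounded relative to $B$ if all three of the following hold: (i) $\mathrm{wt}(a_j)=u$ for every $j$; (ii) $\mathrm{wt}\big(\sum_{j=1}^k a_j\big)=d$; (iii) $u\ge d(1+k^{-1})$. Construction: for an ordered basis $B=(a_1,\dots,a_k)$ of a code $C\le\mathbb{F}^n$, set $a_0:=0\in\mathbb{F}^n$. For $m=1,\dots,k+1$, let $a'_m\in\mathbb{F}^{n(k+1)}$ be the column vector made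 of $k+1$ blocks of length $n$. Its $r$-th block, for $r=1,\dots,k+1$, is $a_{r-m}$, where the subscript is read modulo $k+1$ with representatives in $\{0,\dots,k\}$. Thus $a'_1=(0,a_1,\dots,a_k)^T$, $a'_2=(a_k,0,a_1,\dots,a_{k-1})^T$, …, $a'_{k+1}=(a_1,\dots,a_k,0)^T$ in block form. Define ${\sf Basis}(B)=(a'_1,\dots,a'_{k+1})$, and let ${\sf Code}(B)\le\mathbb{F}^{n(k+1)}$ be its $\mathbb{F}$-linear span. *)

theory Defs
  imports Complex_Main "HOL-Library.Function_Algebras"
begin

text \<open>Vectors of F^n are modelled as functions nat => F that vanish outside {0..<n}.\<close>

definition fscale :: "'a::field \<Rightarrow> (nat \<Rightarrow> 'a) \<Rightarrow> (nat \<Rightarrow> 'a)" where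
  "fscale c x = (\<lambda>i. c * x i)"

lemma vector_space_fscale: "vector_space (fscale :: 'a::field \<Rightarrow> _)"
  by unfold_locales (auto simp: fscale_def algebra_simps fun_eq_iff)

definition Fn :: "nat \<Rightarrow> (nat \<Rightarrow> 'a::zero) set" where
  "Fn n = {x. \<forall>i. n \<le> i \<longrightarrow> x i = 0}"

definition wt :: "nat \<Rightarrow> (nat \<Rightarrow> 'a::zero) \<Rightarrow> nat" where
  "wt n x = card {i. i < n \<and> x i \<noteq> 0}"

definition min_dist :: "nat \<Rightarrow> (nat \<Rightarrow> 'a::zero) set \<Rightarrow> nat" where
  "min_dist n C = Min (wt n ` (C - {\<lambda>_. 0}))"

definition is_code :: "nat \<Rightarrow> nat \<Rightarrow> nat \<Rightarrow> (nat \<Rightarrow> 'a::field) set \<Rightarrow> bool" where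
  "is_code n k d C \<longleftrightarrow> C \<subseteq> Fn n \<and> module.subspace fscale C
     \<and> vector_space.dim fscale C = k \<and> min_dist n C = d"

definition ordered_basis :: "(nat \<Rightarrow> 'a::field) list \<Rightarrow> (nat \<Rightarrow> 'a) set \<Rightarrow> bool" where
  "ordered_basis B C \<longleftrightarrow> distinct B \<and> module.independent fscale (set B)
     \<and> module.span fscale (set B) = C"

definition u_bounded :: "nat \<Rightarrow> nat \<Rightarrow> nat \<Rightarrow> (nat \<Rightarrow> 'a::field) list \<Rightarrow> bool" where
  "u_bounded n d u B \<longleftrightarrow> (\<forall>a\<in>set B. wt n a = u) \<and> wt n (sum_list B) = d
     \<and> real u \<ge> real d * (1 + 1 / real (length B))"

text \<open>The vector a'_(m+1) (m = 0..k, 0-based) of length (k+1)n: its (r+1)-th block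
  (r = 0..k) is a_j with j = (r - m) mod (k+1), where a_0 = 0 and a_j = B!(j-1).\<close>
definition aug_vec :: "(nat \<Rightarrow> 'a::field) list \<Rightarrow> nat \<Rightarrow> nat \<Rightarrow> (nat \<Rightarrow> 'a)" where
  "aug_vec B n m = (\<lambda>i. if i < (length B + 1) * n then
      (let j = nat ((int (i div n) - int m) mod int (length B + 1))
       in if j = 0 then 0 else (B ! (j - 1)) (i mod n))
     else 0)"

definition Basis_of :: "(nat \<Rightarrow> 'a::field) list \<Rightarrow> nat \<Rightarrow> (nat \<Rightarrow> 'a) list" where
  "Basis_of B n = map (aug_vec B n) [0..<length B + 1]"

definition Code_of :: "(nat \<Rightarrow> 'a::field) list \<Rightarrow> nat \<Rightarrow> (nat \<Rightarrow> 'a) set" where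
  "Code_of B n = module.span fscale (set (Basis_of B n))"

end

theory Submission
  imports Defs
begin

interpretation V: vector_space "fscale :: 'a::field \<Rightarrow> (nat \<Rightarrow> 'a) \<Rightarrow> _"
  by (rule vector_space_fscale)

lemma sum_fun_at: "(\<Sum>m\<in>M. f m) i = (\<Sum>m\<in>M. f m i)"
  by (induction M rule: infinite_finite_induct) auto

lemma fscale_at[simp]: "fscale c x i = c * x i"
  by (simp add: fscale_def)

definition gidx :: "nat \<Rightarrow> nat \<Rightarrow> nat \<Rightarrow> nat" where
  "gidx K r m = nat ((int r - int m) mod int K)"

definition Avec :: "(nat \<Rightarrow> 'a::zero) list \<Rightarrow> nat \<Rightarrow> (nat \<Rightarrow> 'a)" where
  "Avec B j = (if j = 0 then (\<lambda>_. 0) else B!(j-1))"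

definition blk :: "nat \<Rightarrow> (nat \<Rightarrow> 'a::zero) \<Rightarrow> nat \<Rightarrow> (nat \<Rightarrow> 'a)" where
  "blk n x r = (\<lambda>i. if i < n then x (r*n+i) else 0)"

lemma gidx_alt: "r < K \<Longrightarrow> m < K \<Longrightarrow> gidx K r m = (if m \<le> r then r - m else r + K - m)"
proof -
  assume a: "r < K" "m < K"
  show ?thesis
  proof (cases "m \<le> r")
    case True
    then have "(int r - int m) mod int K = int r - int m" using a by (intro mod_pos_pos_trivial) auto
    then show ?thesis using True unfolding gidx_def by simp
  next
    case False
    have "(int r - int m) mod int K = (int r - int m + int K) mod int K" by simp
    also have "\<dots> = int r - int m + int K" using a False by (intro mod_pos_pos_trivial) auto
    finally show ?thesis using False unfolding gidx_def by simp
  qed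
qed

lemma gidx_lt: "r < K \<Longrightarrow> m < K \<Longrightarrow> gidx K r m < K"
  by (cases "m \<le> r") (auto simp: gidx_alt)

lemma gidx_inv: "r < K \<Longrightarrow> m < K \<Longrightarrow> gidx K r (gidx K r m) = m"
  by (cases "m \<le> r") (auto simp: gidx_alt)

lemma gidx_zero: "r < K \<Longrightarrow> m < K \<Longrightarrow> gidx K r m = 0 \<longleftrightarrow> r = m"
  by (simp add: gidx_alt)

lemma aug_at:
  assumes "i < n" "r < length B + 1"
  shows "aug_vec B n m (r*n+i) = Avec B (gidx (length B+1) r m) i"
proof -
  have "r*n+i < (length B + 1) * n"
  proof -
    have "r*n+i < r*n + n" using assms by simp
    also have "\<dots> = (r+1)*n" by simp
    also have "\<dots> \<le> (length B + 1) * n" using assms by (intro mult_le_mono1) simp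
    finally show ?thesis .
  qed
  moreover have "(r*n+i) div n = r" "(r*n+i) mod n = i" using assms by auto
  ultimately show ?thesis unfolding aug_vec_def Avec_def gidx_def Let_def by simp
qed

lemma set_nth_image: "set L = (!) L ` {..<length L}"
  by (auto simp: in_set_conv_nth)

lemma sum_set_list: "distinct L \<Longrightarrow> (\<Sum>v\<in>set L. f v) = (\<Sum>j<length L. f (L!j))"
  by (subst set_nth_image, subst sum.reindex) (auto simp: inj_on_def nth_eq_iff_index_eq)

lemma span_list:
  assumes "distinct L" "x \<in> V.span (set L)"
  shows "\<exists>c. x = (\<Sum>j<length L. fscale (c j) (L!j))"
proof -
  obtain u where "x = (\<Sum>v\<in>set L. fscale (u v) v)"
    using assms(2) V.span_finite[of "set L"] by auto
  then have "x = (\<Sum>j<length L. fscale (u (L!j)) (L!j))"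
    using sum_set_list[OF assms(1), of "\<lambda>v. fscale (u v) v"] by simp
  then show ?thesis by (rule exI[where x="\<lambda>j. u (L!j)"])
qed

lemma in_span_list: "(\<Sum>j<length L. fscale (c j) (L!j)) \<in> V.span (set L)"
  by (intro V.span_sum V.span_scale V.span_base) simp

lemma indep_list_D:
  assumes "distinct L" "V.independent (set L)"
    "(\<Sum>j<length L. fscale (e j) (L!j)) = 0" "j < length L"
  shows "e j = 0"
proof -
  define u where "u v = e (the_inv_into {..<length L} ((!) L) v)" for v
  have inj: "inj_on ((!) L) {..<length L}" using assms(1) by (auto simp: inj_on_def nth_eq_iff_index_eq)
  have ue: "u (L!i) = e i" if "i < length L" for i
    unfolding u_def using the_inv_into_f_f[OF inj] that by simp
  have "(\<Sum>v\<in>set L. fscale (u v) v) = (\<Sum>i<length L. fscale (u (L!i)) (L!i))"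
    by (rule sum_set_list[OF assms(1)])
  also have "\<dots> = (\<Sum>i<length L. fscale (e i) (L!i))" by (rule sum.cong) (simp_all add: ue)
  also have "\<dots> = 0" by (rule assms(3))
  finally have "u (L!j) = 0"
    using V.independentD[OF assms(2), of "set L" u "L!j"] assms(4) by simp
  then show ?thesis using ue assms(4) by simp
qed

lemma indep_list_I:
  assumes "distinct L"
    "\<And>c. (\<Sum>j<length L. fscale (c j) (L!j)) = 0 \<Longrightarrow> \<forall>j<length L. c j = 0"
  shows "V.independent (set L)"
proof
  assume "V.dependent (set L)"
  then obtain u v where uv: "v \<in> set L" "u v \<noteq> 0" "(\<Sum>v\<in>set L. fscale (u v) v) = 0"
    using V.dependent_finite[of "set L"] by auto
  then have "(\<Sum>j<length L. fscale (u (L!j)) (L!j)) = 0" using sum_set_list[OF assms(1), of "\<lambda>v. fscale (u v) v"] by simp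
  from assms(2)[OF this] have "\<forall>j<length L. u (L!j) = 0" .
  with uv(1,2) show False by (auto simp: in_set_conv_nth)
qed

lemma comb_blk:
  assumes "\<forall>j<length B. B!j \<in> Fn n" "r < length B + 1"
  shows "blk n (\<Sum>m<length B+1. fscale (c m) (aug_vec B n m)) r
       = (\<Sum>j<length B. fscale (c (gidx (length B+1) r (Suc j))) (B!j))"
proof (rule ext)
  fix i
  let ?K = "length B + 1"
  let ?g = "gidx ?K r"
  have r: "r < Suc (length B)" using assms(2) by simp
  show "blk n (\<Sum>m<?K. fscale (c m) (aug_vec B n m)) r i
       = (\<Sum>j<length B. fscale (c (?g (Suc j))) (B!j)) i"
  proof (cases "i < n")
    case True
    have "blk n (\<Sum>m<?K. fscale (c m) (aug_vec B n m)) r i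
        = (\<Sum>m<?K. c m * Avec B (?g m) i)"
      using True assms(2) by (simp add: blk_def sum_fun_at aug_at)
    also have "\<dots> = (\<Sum>j<?K. c (?g j) * Avec B j i)"
      by (rule sum.reindex_bij_witness[where i="?g" and j="?g"])
         (auto simp: gidx_inv[OF r] gidx_lt[OF r])
    also have "\<dots> = (\<Sum>j<length B. c (?g (Suc j)) * (B!j) i)"
      by (simp only: Suc_eq_plus1[symmetric] sum.lessThan_Suc_shift) (simp add: Avec_def)
    finally show ?thesis by (simp add: sum_fun_at)
  next
    case False
    have z: "(B!j) i = 0" if "j < length B" for j using assms(1) that False by (auto simp: Fn_def)
    have "(\<Sum>j<length B. fscale (c (?g (Suc j))) (B!j)) i = (\<Sum>j<length B. c (?g (Suc j)) * (B!j) i)"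
      by (simp only: sum_fun_at fscale_at)
    also have "\<dots> = 0" by (rule sum.neutral) (simp add: z)
    finally show ?thesis using False by (simp add: blk_def)
  qed
qed

lemma wt_blocks: "wt (K*n) x = (\<Sum>r<K. wt n (blk n x r))"
proof (induction K)
  case 0
  then show ?case by (simp add: wt_def)
next
  case (Suc K)
  have eq: "{i. i < Suc K * n \<and> x i \<noteq> 0} = {i. i < K*n \<and> x i \<noteq> 0} \<union> (\<lambda>i. K*n+i) ` {i. i < n \<and> x (K*n+i) \<noteq> 0}"
  proof (rule set_eqI, rule iffI)
    fix i assume i: "i \<in> {i. i < Suc K * n \<and> x i \<noteq> 0}"
    show "i \<in> {i. i < K*n \<and> x i \<noteq> 0} \<union> (\<lambda>i. K*n+i) ` {i. i < n \<and> x (K*n+i) \<noteq> 0}"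
    proof (cases "i < K*n")
      case False
      define j where "j = i - K*n"
      have ij: "i = K*n + j" using False unfolding j_def by simp
      have "j < n" using i ij by simp
      then have "j \<in> {i. i < n \<and> x (K*n+i) \<noteq> 0}" using i ij by simp
      then show ?thesis unfolding ij by blast
    qed (use i in auto)
  next
    fix i assume "i \<in> {i. i < K*n \<and> x i \<noteq> 0} \<union> (\<lambda>i. K*n+i) ` {i. i < n \<and> x (K*n+i) \<noteq> 0}"
    then show "i \<in> {i. i < Suc K * n \<and> x i \<noteq> 0}" by auto
  qed
  have fin: "finite {i. i < K*n \<and> x i \<noteq> 0}" by simp
  have dis: "{i. i < K*n \<and> x i \<noteq> 0} \<inter> (\<lambda>i. K*n+i) ` {i. i < n \<and> x (K*n+i) \<noteq> 0} = {}" by auto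
  have c1: "card ({i. i < K*n \<and> x i \<noteq> 0} \<union> (\<lambda>i. K*n+i) ` {i. i < n \<and> x (K*n+i) \<noteq> 0})
     = card {i. i < K*n \<and> x i \<noteq> 0} + card ((\<lambda>i. K*n+i) ` {i. i < n \<and> x (K*n+i) \<noteq> 0})"
    by (rule card_Un_disjoint) (use fin dis in auto)
  have c2: "card ((\<lambda>i. K*n+i) ` {i. i < n \<and> x (K*n+i) \<noteq> 0}) = card {i. i < n \<and> x (K*n+i) \<noteq> 0}"
    by (rule card_image) (simp add: inj_on_def)
  have "wt (Suc K * n) x = wt (K*n) x + card {i. i < n \<and> x (K*n+i) \<noteq> 0}"
    unfolding wt_def eq c1 c2 ..
  also have "card {i. i < n \<and> x (K*n+i) \<noteq> 0} = wt n (blk n x K)"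
    unfolding wt_def blk_def by (rule arg_cong[where f=card]) auto
  finally show ?case using Suc by simp
qed


lemma fscale_one[simp]: "fscale 1 x = x"
  by (simp add: fscale_def)

lemma wt_le: "wt n x \<le> n"
proof -
  have "{i. i < n \<and> x i \<noteq> 0} \<subseteq> {..<n}" by auto
  then show ?thesis unfolding wt_def using card_mono[of "{..<n}"] by fastforce
qed

lemma wt_fscale: "c \<noteq> 0 \<Longrightarrow> wt n (fscale c x) = wt n x"
  by (simp add: wt_def)

lemma zfun: "(\<lambda>_. 0) = (0 :: nat \<Rightarrow> 'a::zero)"
  by (simp add: zero_fun_def)

lemma fin_wt_img: "finite (wt n ` S)"
  by (rule finite_subset[of _ "{..n}"]) (auto simp: wt_le)

theorem proposition3p3:
  fixes n k d :: nat and B :: "(nat \<Rightarrow> 'a::field) list" and C :: "(nat \<Rightarrow> 'a) set"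
  assumes code: "is_code n k d C"
    and basis: "ordered_basis B C"
    and len: "length B = k"
    and kpos: "k \<ge> 1"
  shows "ordered_basis (Basis_of B n) (Code_of B n)
         \<and> length (Basis_of B n) = k + 1
         \<and> is_code ((k + 1) * n) (k + 1) (min_dist ((k + 1) * n) (Code_of B n)) (Code_of B n)
         \<and> min_dist ((k + 1) * n) (Code_of B n) \<ge> k * d
         \<and> (\<forall>u::nat. u > 0 \<longrightarrow> u_bounded n d u B \<longrightarrow>
              min_dist ((k + 1) * n) (Code_of B n) = (k + 1) * d
              \<and> (u_bounded ((k + 1) * n) ((k + 1) * d) (k * u) (Basis_of B n)
                   \<longleftrightarrow> real u \<ge> real d * (1 + 2 / real k)))"
proof -
  define K where "K = k + 1"
  define a' where "a' = aug_vec B n"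
  define L where "L = Basis_of B n"
  define CC where "CC = Code_of B n"
  have CFn: "C \<subseteq> Fn n" and dC: "min_dist n C = d" using code unfolding is_code_def by auto
  have distB: "distinct B" and indB: "V.independent (set B)" and spanB: "V.span (set B) = C"
    using basis unfolding ordered_basis_def by auto
  have BC: "B!j \<in> C" if "j < k" for j
    using spanB V.span_base[of "B!j" "set B"] that len by auto
  have BFn: "\<forall>j<length B. B!j \<in> Fn n" using BC CFn len by auto
  have Bnz: "B!j \<noteq> 0" if "j < k" for j
    using V.dependent_zero[of "set B"] indB that len by (metis nth_mem)
  have combC: "(\<Sum>j<k. fscale (e j) (B!j)) \<in> C" for e
    using in_span_list[of e B] spanB len by simp
  have finC: "finite (wt n ` (C - {0}))" by (rule fin_wt_img)
  have wtC: "d \<le> wt n y" if "y \<in> C" "y \<noteq> 0" for y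
    using Min_le[OF finC, of "wt n y"] that dC unfolding min_dist_def zfun by auto
  have KS: "K = Suc k" "length B + 1 = K" using len K_def by auto
  have lenL: "length L = K" unfolding L_def Basis_of_def KS(2)[symmetric] by simp
  have Lnth: "L!m = a' m" if "m < K" for m
    unfolding L_def Basis_of_def a'_def KS(2) using that by simp
  have setL: "set L = a' ` {..<K}"
    unfolding L_def Basis_of_def a'_def KS(2) by auto
  have blkx: "blk n (\<Sum>m<K. fscale (c m) (a' m)) r = (\<Sum>j<k. fscale (c (gidx K r (Suc j))) (B!j))"
    if "r < K" for c r
    using comb_blk[OF BFn, of r c] that unfolding a'_def by (simp only: len K_def)
  have blkC: "blk n (\<Sum>m<K. fscale (c m) (a' m)) r \<in> C" if "r < K" for c r
    using blkx[OF that] combC by simp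
  have blk_zero: "c s = 0"
    if "r < K" "blk n (\<Sum>m<K. fscale (c m) (a' m)) r = 0" "s < K" "s \<noteq> r" for c r s
  proof -
    have g: "gidx K r s \<noteq> 0" "gidx K r s < K" using gidx_zero[of r K s] gidx_lt[of r K s] that by auto
    define j where "j = gidx K r s - 1"
    have j: "j < length B" "Suc j = gidx K r s" using g unfolding j_def KS(1) len by auto
    have "(\<Sum>j<length B. fscale (c (gidx K r (Suc j))) (B!j)) = 0"
      using blkx[OF that(1), of c] that(2) len by simp
    from indep_list_D[OF distB indB this j(1)] have "c (gidx K r (gidx K r s)) = 0" using j(2) by simp
    then show ?thesis using gidx_inv[OF that(1) that(3)] by simp
  qed
  have x_zero: "c s = 0" if "(\<Sum>m<K. fscale (c m) (a' m)) = 0" "s < K" for c s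
  proof -
    define r where "r = (if s = 0 then 1 else 0::nat)"
    have r: "r < K" "r \<noteq> s" using kpos KS unfolding r_def by auto
    have "blk n (\<Sum>m<K. fscale (c m) (a' m)) r = 0" using that(1) by (simp add: blk_def fun_eq_iff)
    from blk_zero[OF r(1) this that(2)] r(2) show ?thesis by simp
  qed
  have a'_at: "a' m (r*n+i) = Avec B (gidx K r m) i" if "i < n" "r < K" for m r i
    using aug_at[of i n r B m] that unfolding a'_def KS(2) by simp
  have injA: "inj_on a' {..<K}"
  proof (rule inj_onI, rule ccontr)
    fix m m' assume mm: "m \<in> {..<K}" "m' \<in> {..<K}" "a' m = a' m'" "m \<noteq> m'"
    have g: "gidx K m m' \<noteq> 0" "gidx K m m' < K" using gidx_zero[of m K m'] gidx_lt[of m K m'] mm by auto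
    define j where "j = gidx K m m' - 1"
    have j: "j < k" "Suc j = gidx K m m'" using g unfolding j_def KS(1) by auto
    obtain i where i: "(B!j) i \<noteq> 0" using Bnz[OF j(1)] by (auto simp: fun_eq_iff)
    have "i < n"
    proof (rule ccontr)
      assume "\<not> i < n"
      then have "(B!j) i = 0" using BFn j(1) len by (simp add: Fn_def)
      with i show False by simp
    qed
    have "a' m (m*n+i) = 0" using a'_at[OF \<open>i<n\<close>, of m m] mm gidx_zero[of m K m]
      by (simp add: Avec_def)
    moreover have "a' m' (m*n+i) = (B!j) i" using a'_at[OF \<open>i<n\<close>, of m m'] mm j(2)[symmetric]
      by (simp add: Avec_def)
    ultimately show False using mm(3) i by simp
  qed
  have distL: "distinct L"
    unfolding L_def Basis_of_def a'_def[symmetric] distinct_map using injA KS(2)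
    by (simp add: lessThan_atLeast0)
  have sumL: "(\<Sum>j<length L. fscale (c j) (L!j)) = (\<Sum>m<K. fscale (c m) (a' m))" for c
    unfolding lenL by (rule sum.cong) (simp_all add: Lnth)
  have indL: "V.independent (set L)"
    by (rule indep_list_I[OF distL]) (use x_zero sumL lenL in auto)
  have CCspan: "CC = V.span (set L)" unfolding CC_def Code_of_def L_def ..
  have rep: "\<exists>c. x = (\<Sum>m<K. fscale (c m) (a' m))" if "x \<in> CC" for x
    using span_list[OF distL, of x] that sumL CCspan by auto
  have inCC: "(\<Sum>m<K. fscale (c m) (a' m)) \<in> CC" for c
    using in_span_list[of c L] sumL CCspan by simp
  have wtx: "wt (K*n) x = (\<Sum>r<K. wt n (blk n x r))" for x by (rule wt_blocks)
  have CCFn: "CC \<subseteq> Fn (K*n)"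
  proof
    fix x assume xCC: "x \<in> CC"
    obtain c where c: "x = (\<Sum>m<K. fscale (c m) (a' m))" using rep[OF xCC] by blast
    have z: "a' m i = 0" if "K*n \<le> i" for m i
      unfolding a'_def aug_vec_def KS(2) using that by simp
    show "x \<in> Fn (K*n)" unfolding Fn_def c
      by (auto simp: sum_fun_at z)
  qed
  have dimCC: "V.dim CC = K"
    using V.dim_span_eq_card_independent[OF indL] CCspan distinct_card[OF distL] lenL by simp
  have finW: "finite (wt (K*n) ` (CC - {0}))" by (rule fin_wt_img)
  have a'CC: "a' 0 \<in> CC" using CCspan setL V.span_base[of "a' 0" "set L"] KS by auto
  have a'nz: "a' m \<noteq> 0" if "m < K" for m
    using V.dependent_zero[of "set L"] indL setL that by auto
  have Wne: "wt (K*n) ` (CC - {0}) \<noteq> {}" using a'CC a'nz[of 0] KS by auto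
  have lower: "k * d \<le> wt (K*n) x \<and> ((\<forall>r<K. blk n x r \<noteq> 0) \<and> K * d \<le> wt (K*n) x
        \<or> (\<exists>s<K. \<exists>c. c \<noteq> 0 \<and> x = fscale c (a' s)))"
    if xCC: "x \<in> CC" and xnz: "x \<noteq> 0" for x
  proof -
    obtain c where c: "x = (\<Sum>m<K. fscale (c m) (a' m))" using rep[OF xCC] by blast
    show ?thesis
    proof (cases "\<forall>r<K. blk n x r \<noteq> 0")
      case True
      have "K * d \<le> (\<Sum>r<K. wt n (blk n x r))"
        using sum_bounded_below[of "{..<K}" d "\<lambda>r. wt n (blk n x r)"] wtC blkC True c by simp
      then have "K * d \<le> wt (K*n) x" by (simp only: wtx)
      moreover have "k * d \<le> K * d" using KS by simp
      ultimately have "k * d \<le> wt (K*n) x" by (rule le_trans[rotated])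
      then show ?thesis using True \<open>K * d \<le> wt (K*n) x\<close> by blast
    next
      case False
      then obtain s where s: "s < K" "blk n x s = 0" by blast
      have ct: "c t = 0" if "t < K" "t \<noteq> s" for t using blk_zero[OF s(1) _ that] s(2) c by simp
      have xs: "x = fscale (c s) (a' s)"
      proof (rule ext)
        fix i
        have "x i = (\<Sum>m<K. c m * a' m i)" unfolding c by (simp add: sum_fun_at)
        also have "\<dots> = c s * a' s i + (\<Sum>m\<in>{..<K}-{s}. c m * a' m i)" using s(1) by (simp add: sum.remove)
        also have "(\<Sum>m\<in>{..<K}-{s}. c m * a' m i) = 0" by (rule sum.neutral) (simp add: ct)
        finally show "x i = fscale (c s) (a' s) i" by simp
      qed
      have cs: "c s \<noteq> 0" using xs xnz by (auto simp: fscale_def fun_eq_iff)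
      have nz: "blk n x r \<noteq> 0" if "r < K" "r \<noteq> s" for r
        using blk_zero[OF that(1) _ s(1) that(2)[symmetric], of c] c cs by auto
      have "wt (K*n) x = wt n (blk n x s) + (\<Sum>r\<in>{..<K}-{s}. wt n (blk n x r))"
        unfolding wtx using s(1) by (simp add: sum.remove)
      also have "\<dots> \<ge> card ({..<K}-{s}) * d"
        using sum_bounded_below[of "{..<K}-{s}" d "\<lambda>r. wt n (blk n x r)"] wtC blkC nz c by auto
      finally have "k * d \<le> wt (K*n) x" using s(1) KS by simp
      then show ?thesis using xs cs s(1) by blast
    qed
  qed
  have mdCC: "k * d \<le> min_dist (K*n) CC"
    unfolding min_dist_def zfun using Min_ge_iff[OF finW Wne] lower by auto
  have partb: "min_dist (K*n) CC = K * d
        \<and> (u_bounded (K*n) (K*d) (k*u) L \<longleftrightarrow> real u \<ge> real d * (1 + 2 / real k))"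
    if upos: "u > 0" and ub: "u_bounded n d u B" for u
  proof -
    have wB: "wt n a = u" if "a \<in> set B" for a using ub that unfolding u_bounded_def by auto
    have wsB: "wt n (sum_list B) = d" using ub unfolding u_bounded_def by auto
    have ineq: "real u \<ge> real d * (1 + 1 / real k)" using ub len unfolding u_bounded_def by auto
    have kuK: "K * d \<le> k * u"
    proof -
      have "real d * (real k + 1) \<le> real k * real u"
        using ineq kpos by (simp add: field_simps)
      then have "real (K * d) \<le> real (k * u)" using KS by (simp add: algebra_simps)
      then show ?thesis by linarith
    qed
    have wA: "wt n (Avec B j) = (if j = 0 then 0 else u)" if "j < K" for j
      using that wB KS len by (auto simp: Avec_def wt_def)
    have blkA: "blk n (a' s) r = Avec B (gidx K r s)" if "r < K" "s < K" for r s
    proof (rule ext)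
      fix i show "blk n (a' s) r i = Avec B (gidx K r s) i"
      proof (cases "i < n")
        case True then show ?thesis using a'_at[OF True that(1)] by (simp add: blk_def)
      next
        case False
        have "gidx K r s < K" by (rule gidx_lt) (use that in auto)
        then show ?thesis using False BFn len KS by (auto simp: blk_def Avec_def Fn_def)
      qed
    qed
    have wa': "wt (K*n) (a' s) = k * u" if "s < K" for s
    proof -
      have "wt (K*n) (a' s) = (\<Sum>r<K. (if r = s then 0 else u))"
        unfolding wtx
      proof (rule sum.cong)
        fix r assume r: "r \<in> {..<K}"
        then have "gidx K r s < K" "(gidx K r s = 0) = (r = s)"
          using gidx_lt[of r K s] gidx_zero[of r K s] that by auto
        then show "wt n (blk n (a' s) r) = (if r = s then 0 else u)"
          using blkA[of r s] r wA that by auto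
      qed simp
      also have "\<dots> = (\<Sum>r\<in>{..<K}-{s}. u)" using that by (simp add: sum.remove)
      also have "\<dots> = k * u" using that KS by simp
      finally show ?thesis .
    qed
    define xall where "xall = (\<Sum>m<K. a' m)"
    have sumB: "sum_list B = (\<Sum>j<k. B!j)"
      using sum_list_sum_nth[of B] len by (simp add: lessThan_atLeast0)
    have blkall: "blk n xall r = sum_list B" if "r < K" for r
      using blkx[OF that, of "\<lambda>_. 1"] sumB unfolding xall_def by simp
    have wall: "wt (K*n) xall = K * d" unfolding wtx using blkall wsB by simp
    have xallCC: "xall \<in> CC" using inCC[of "\<lambda>_. 1"] unfolding xall_def by simp
    have xallnz: "xall \<noteq> 0" using x_zero[of "\<lambda>_. 1" 0] KS unfolding xall_def by auto
    have md: "min_dist (K*n) CC = K * d"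
      unfolding min_dist_def zfun
    proof (rule Min_eqI[OF finW])
      fix y assume "y \<in> wt (K*n) ` (CC - {0})"
      then obtain x where x: "x \<in> CC" "x \<noteq> 0" "y = wt (K*n) x" by auto
      from lower[OF x(1,2)] show "K * d \<le> y"
      proof (elim conjE disjE exE)
        fix s c assume "s < K" "c \<noteq> 0" "x = fscale c (a' s)"
        then have "y = k * u" using x(3) wa' wt_fscale[of c "K*n" "a' s"] by simp
        then show ?thesis using kuK by simp
      qed (use x in auto)
    qed (use wall xallCC xallnz in force)
    have sumLall: "sum_list L = xall"
    proof -
      have "sum_list L = sum_list (map a' [0..<K])" unfolding L_def Basis_of_def a'_def KS(2) ..
      also have "\<dots> = sum a' {..<K}" by (simp add: sum_list_distinct_conv_sum_set lessThan_atLeast0)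
      finally show ?thesis unfolding xall_def .
    qed
    have "u_bounded (K*n) (K*d) (k*u) L \<longleftrightarrow> real (k*u) \<ge> real (K*d) * (1 + 1 / real K)"
      unfolding u_bounded_def lenL sumLall wall using wa' setL by auto
    also have "\<dots> \<longleftrightarrow> real u \<ge> real d * (1 + 2 / real k)"
    proof -
      have kp: "real k > 0" using kpos by simp
      have e1: "real (K*d) * (1 + 1/real K) = real d * (real k + 2)" using KS by (simp add: field_simps)
      have e2: "real d * (1 + 2/real k) = real d * (real k + 2) / real k" using kp by (simp add: field_simps)
      have "real d * (real k + 2) / real k \<le> real u \<longleftrightarrow> real d * (real k + 2) \<le> real u * real k"
        using kp by (rule pos_divide_le_eq)
      then show ?thesis unfolding e1 e2 by (simp add: mult.commute)
    qed
    finally show ?thesis using md by simp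
  qed
  show ?thesis
    unfolding K_def[symmetric] L_def[symmetric] CC_def[symmetric]
    using distL indL CCspan lenL CCFn dimCC mdCC partb
    unfolding ordered_basis_def is_code_def by auto
qed

end
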